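(* Let $h$ be a positive, non-decreasing, continuously differentiable function with $h(u)\to\infty$ and $uh'(u)/h(u)\to0$ as $u\to\infty$. Let $g(u)=h(u)/(uh'(u))$ and $$v(u)=\min\left(\log u,\ \min_{\log u\le t\le\log^2 u}g(t)\right).$$ Then $v(u)\to\infty$ as $u\to\infty$, and $$h(v(u)\log u)=(1+o(1))\,h(\log u)\quad\text{as } u\to\infty.$$
   Context: $\log^2u$ means $(\log u)^2$. *)

theory Defs
  imports "HOL-Analysis.Analysis" "HOL-Library.Landau_Symbols"
begin

definition gfun :: "(real \<Rightarrow> real) \<Rightarrow> (real \<Rightarrow> real) \<Rightarrow> real \<Rightarrow> ereal" where
  "gfun h h' t = (if h' t = 0 then \<infinity> else ereal (h t / (t * h' t)))"

definition vfun :: "(real \<Rightarrow> real) \<Rightarrow> (real \<Rightarrow> real) \<Rightarrow> real \<Rightarrow> real" where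
  "vfun h h' u = real_of_ereal (min (ereal (ln u)) (INF t\<in>{ln u..(ln u)^2}. gfun h h' t))"

end

theory Submission
  imports Defs "HOL-Real_Asymp.Real_Asymp"
begin

theorem lemma6p3:
  fixes h h' :: "real \<Rightarrow> real" and a :: real
  assumes pos: "\<And>u. u > a \<Longrightarrow> h u > 0"
    and mono: "\<And>u w. a < u \<Longrightarrow> u \<le> w \<Longrightarrow> h u \<le> h w"
    and deriv: "\<And>u. u > a \<Longrightarrow> (h has_real_derivative h' u) (at u)"
    and cont: "continuous_on {a<..} h'"
    and lim_h: "filterlim h at_top at_top"
    and lim_ratio: "((\<lambda>u. u * h' u / h u) \<longlongrightarrow> 0) at_top"
  shows "filterlim (vfun h h') at_top at_top \<and>
         (\<lambda>u. h (vfun h h' u * ln u)) \<sim>[at_top] (\<lambda>u. h (ln u))"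
proof -
  have h'nn: "h' t \<ge> 0" if ta: "t > a" for t
  proof (rule ccontr)
    assume "\<not> h' t \<ge> 0"
    then have "h' t < 0" by simp
    from DERIV_neg_dec_right[OF deriv[OF ta] this] obtain d where
      d: "d > 0" "\<forall>e>0. e < d \<longrightarrow> h t > h (t + e)" by blast
    then have "h (t + d/2) < h t" by simp
    moreover have "h t \<le> h (t + d/2)" using mono[OF ta] d by simp
    ultimately show False by simp
  qed
  define W where "W u = min (ereal (ln u)) (INF t\<in>{ln u..(ln u)^2}. gfun h h' t)" for u
  have vW: "vfun h h' u = real_of_ereal (W u)" for u by (simp add: vfun_def W_def)
  have Wle: "W u \<le> ereal (ln u)" for u by (simp add: W_def)
  have K: "eventually (\<lambda>u. ereal M \<le> W u) at_top" if M: "M > 0" for M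
  proof -
    have "eventually (\<lambda>t. t * h' t / h t < 1/M) at_top"
      using order_tendstoD(2)[OF lim_ratio] M by simp
    then obtain T where T: "\<And>t. t \<ge> T \<Longrightarrow> t * h' t / h t < 1/M"
      by (auto simp: eventually_at_top_linorder)
    define T1 where "T1 = max T (max M (max a 0 + 1))"
    have "eventually (\<lambda>u. u \<ge> exp T1) at_top" by (rule eventually_ge_at_top)
    then show ?thesis
    proof (rule eventually_mono)
      fix u assume u: "u \<ge> exp T1"
      have lu: "ln u \<ge> T1" using u
        by (metis exp_gt_zero exp_le_cancel_iff exp_ln order_less_le_trans)
      have "ereal M \<le> (INF t\<in>{ln u..(ln u)^2}. gfun h h' t)"
      proof (rule INF_greatest)
        fix t assume "t \<in> {ln u..(ln u)^2}"
        then have t: "t \<ge> T1" using lu by auto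
        then have ta: "t > a" "t > 0" "t \<ge> T" by (auto simp: T1_def)
        have hp: "h t > 0" using pos ta by auto
        have hn: "h' t \<ge> 0" using h'nn ta by auto
        have r: "t * h' t / h t < 1/M" using T ta by auto
        show "ereal M \<le> gfun h h' t"
        proof (cases "h' t = 0")
          case True then show ?thesis by (simp add: gfun_def)
        next
          case False
          then have hp': "h' t > 0" using hn by simp
          have "M < h t / (t * h' t)"
            using r hp hp' ta M by (simp add: field_simps)
          then show ?thesis by (simp add: gfun_def False)
        qed
      qed
      moreover have "ereal M \<le> ereal (ln u)" using lu by (simp add: T1_def)
      ultimately show "ereal M \<le> W u" by (simp add: W_def)
    qed
  qed
  have vge: "eventually (\<lambda>u. vfun h h' u \<ge> M \<and> W u = ereal (vfun h h' u)) at_top"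
    if "M > 0" for M
    using K[OF that]
  proof (rule eventually_mono)
    fix u assume "ereal M \<le> W u"
    with Wle[of u] show "vfun h h' u \<ge> M \<and> W u = ereal (vfun h h' u)"
      by (cases "W u") (auto simp: vW)
  qed
  have part1: "filterlim (vfun h h') at_top at_top"
    unfolding filterlim_at_top
  proof
    fix Z :: real
    show "eventually (\<lambda>u. Z \<le> vfun h h' u) at_top"
      using vge[of "max Z 1"] by (rule eventually_mono) auto
  qed
  have ev: "eventually (\<lambda>u. 1 \<le> h (vfun h h' u * ln u) / h (ln u) \<and>
      h (vfun h h' u * ln u) / h (ln u) \<le> exp (ln (vfun h h' u) / vfun h h' u)) at_top"
    using vge[of 2, OF zero_less_numeral] eventually_ge_at_top[of "exp (max a 0 + 1)"]
  proof (rule eventually_mono[OF eventually_conj])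
    fix u assume AU: "(2 \<le> vfun h h' u \<and> W u = ereal (vfun h h' u)) \<and> exp (max a 0 + 1) \<le> u"
    then have A: "2 \<le> vfun h h' u \<and> W u = ereal (vfun h h' u)" and u: "exp (max a 0 + 1) \<le> u" by auto
    define v where "v = vfun h h' u"
    define L where "L = ln u"
    have v2: "v \<ge> 2" and Wv: "W u = ereal v" using A by (auto simp: v_def)
    have lu: "L \<ge> max a 0 + 1" unfolding L_def using u
      by (metis exp_gt_zero exp_le_cancel_iff exp_ln order_less_le_trans)
    have La: "L > a" "L > 0" using lu by auto
    have vL: "v \<le> L" using Wle[of u] Wv by (simp add: L_def)
    have hL: "h L > 0" using pos La by simp
    have Lle: "L \<le> v * L" using v2 La by simp
    have hvL: "h L \<le> h (v * L)" using mono[OF La(1) Lle] .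
    have hvLp: "h (v * L) > 0" using hL hvL by simp
    have lower: "1 \<le> h (v * L) / h L" using hL hvL by simp
    define \<phi> where "\<phi> = (\<lambda>s. ln (h (exp s)))"
    have lt: "ln L < ln (v * L)" using v2 La by simp
    have D: "\<forall>x. ln L \<le> x \<and> x \<le> ln (v * L) \<longrightarrow>
        DERIV \<phi> x :> (h' (exp x) * exp x / h (exp x))"
    proof (intro allI impI)
      fix x assume x: "ln L \<le> x \<and> x \<le> ln (v * L)"
      have "exp x \<ge> L" using x La by (metis exp_le_cancel_iff exp_ln)
      then have ea: "exp x > a" using La by simp
      have hx: "h (exp x) > 0" using pos ea by simp
      have d1: "((\<lambda>s. h (exp s)) has_real_derivative h' (exp x) * exp x) (at x)"
        using DERIV_chain2[OF deriv[OF ea] DERIV_exp] .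
      have "((\<lambda>s. ln (h (exp s))) has_real_derivative
              (1 / h (exp x)) * (h' (exp x) * exp x)) (at x)"
        using DERIV_chain2[OF DERIV_ln_divide[OF hx] d1] .
      then show "DERIV \<phi> x :> (h' (exp x) * exp x / h (exp x))"
        by (simp add: \<phi>_def)
    qed
    obtain z where z: "ln L < z" "z < ln (v * L)"
      and eq: "\<phi> (ln (v * L)) - \<phi> (ln L) = (ln (v * L) - ln L) * (h' (exp z) * exp z / h (exp z))"
      using MVT2[OF lt, of \<phi> "\<lambda>x. h' (exp x) * exp x / h (exp x)"] D by blast
    define t where "t = exp z"
    have tL: "L < t" "t < v * L" using z La v2 unfolding t_def
      by (metis exp_less_cancel_iff exp_ln mult_pos_pos less_le_trans zero_less_numeral)+
    have tL2: "t \<le> L^2" using tL vL La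
      by (smt (verit, ccfv_SIG) mult_right_mono power2_eq_square)
    have ta: "t > a" "t > 0" using tL La by auto
    have "W u \<le> (INF t\<in>{ln u..(ln u)^2}. gfun h h' t)" by (simp add: W_def)
    also have "\<dots> \<le> gfun h h' t" by (rule INF_lower) (use tL tL2 in \<open>auto simp: L_def\<close>)
    finally have gv: "ereal v \<le> gfun h h' t" using Wv by simp
    have hp: "h t > 0" using pos ta by simp
    have rat: "t * h' t / h t \<le> 1 / v"
    proof (cases "h' t = 0")
      case True then show ?thesis using v2 by simp
    next
      case False
      then have hp': "h' t > 0" using h'nn[OF ta(1)] False by linarith
      have "v \<le> h t / (t * h' t)" using gv False by (simp add: gfun_def)
      then show ?thesis using hp hp' ta v2 by (simp add: field_simps)
    qed
    have lnv: "ln (v * L) - ln L = ln v" using v2 La by (simp add: ln_mult)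
    have lnv0: "ln v \<ge> 0" using v2 by simp
    have "\<phi> (ln (v * L)) - \<phi> (ln L) = ln v * (t * h' t / h t)"
      using eq lnv by (simp add: t_def mult.commute)
    also have "\<dots> \<le> ln v * (1 / v)" using rat lnv0 by (rule mult_left_mono)
    finally have dle: "ln (h (v * L)) - ln (h L) \<le> ln v / v"
      using La v2 by (simp add: \<phi>_def)
    have "h (v * L) / h L = exp (ln (h (v * L)) - ln (h L))"
      using hL hvLp by (simp add: exp_diff)
    also have "\<dots> \<le> exp (ln v / v)" using dle by simp
    finally show "1 \<le> h (vfun h h' u * ln u) / h (ln u) \<and>
      h (vfun h h' u * ln u) / h (ln u) \<le> exp (ln (vfun h h' u) / vfun h h' u)"
      using lower by (simp add: v_def L_def)
  qed
  have l0: "((\<lambda>x::real. ln x / x) \<longlongrightarrow> 0) at_top" by real_asymp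
  have l1: "((\<lambda>u. ln (vfun h h' u) / vfun h h' u) \<longlongrightarrow> 0) at_top"
    using filterlim_compose[OF l0 part1] .
  have l2: "((\<lambda>u. exp (ln (vfun h h' u) / vfun h h' u)) \<longlongrightarrow> 1) at_top"
    using tendsto_exp[OF l1] by simp
  have "((\<lambda>u. h (vfun h h' u * ln u) / h (ln u)) \<longlongrightarrow> 1) at_top"
    by (rule tendsto_sandwich[OF _ _ tendsto_const l2])
       (use ev in \<open>auto elim: eventually_mono\<close>)
  then have "(\<lambda>u. h (vfun h h' u * ln u)) \<sim>[at_top] (\<lambda>u. h (ln u))"
    by (rule asymp_equivI')
  with part1 show ?thesis by simp
qed

end
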